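(* Let $F$ be a sensori-computational device with a monoidal variator $(D,\odot)$ for $Y=Y(F)$. If some sensori-computational device output simulates $F$ modulo $\Delta_F^{D};\diamond_Y^{D}$, then some sensori-computational device output simulates $F$ modulo $\Delta_F^{D};\int_Y^{D}$.
   Context: A sensori-computational device is a 6-tuple $F=(V,V_0,Y,\tau,C,c)$ where $V$ is a non-empty finite set of states, $V_0\subseteq V$ a non-empty set of initial states, $Y=Y(F)$ a finite set of observations, $\tau:V\times V\to\mathcal{P}(Y)$, $C$ a set of outputs, $c:V\to\mathcal{P}(C)\setminus\{\emptyset\}$. A string $y_1\cdots y_n$ reaches $w$ from $v$ if there are states $w_0=v,\dots,w_n=w$ with $y_i\in\tau(w_{i-1},w_i)$; $\mathcal{R}_F(s)$ is the set of states reached by $s$ from some initial state; $\mathcal{L}(F)=\{s\in Y^*:\mathcal{R}_F(s)\ne\emptyset\}$; $\mathcal{C}_F(s)=\bigcup_{v\in\mathcal{R}_F(s)}c(v)$. For a relation $R\subseteq A\times B$ between sets of strings, $F'$ output simulates $F$ modulo $R$ if for every $s\in\mathcal{L}(F)$: (1) some $t\in\mathcal{L}(F')$ has $s\,R\,t$; (2) every $t\in B$ with $s\,R\,t$ satisfies $t\in\mathcal{L}(F')$ and $\mathcal{C}_F(s)\supseteq\mathcal{C}_{F'}(t)$. Relation composition: $R_1;R_2=\{(u,v):\exists r\ (u,r)\in R_1,(r,v)\in R_2\}$. A monoidal variator for $Y$ is a monoid $(D,\oplus,e_D)$ with a right action $\odot:Y\times D\to Y$ ($y\odot e_D=y$,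 $(y\odot d_1)\odot d_2=y\odot(d_1\oplus d_2)$). Its delta relation $\Delta_F^{D}\subseteq\mathcal{L}(F)\times(\{\epsilon\}\cup Y\cdot D^* )$ consists of $(\epsilon,\epsilon)$; $(y_0,y_0)$ for $y_0\in Y\cap\mathcal{L}(F)$; and $(y_0y_1\cdots y_m,\ y_0d_1\cdots d_m)$ for $y_0\cdots y_m\in\mathcal{L}(F)$, $m\ge1$, whenever $y_k=y_{k-1}\odot d_k$ for all $k$. The monoid disaggregator $\diamond_Y^{D}$ is the relation on $\{\epsilon\}\cup Y\cdot D^*$ consisting of $(\epsilon,\epsilon)$, $(y_0,y_0)$ for $y_0\in Y$, and $(y_0d_1\cdots d_m,\ y_0d_1'\cdots d_n')$ for $m,n\ge1$ whenever $d_1\oplus\cdots\oplus d_m=d_1'\oplus\cdots\oplus d_n'$. The monoid integrator is the function $\int_Y^{D}:\{\epsilon\}\cup Y\cdot D^*\to\{\epsilon\}\cup Y\cup Y\cdot D$ with $\epsilon\mapsto\epsilon$, $y_0\mapsto y_0$, and $y_0d_1\cdots d_m\mapsto y_0(d_1\oplus\cdots\oplus d_m)$ for $m\ge1$. *)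

theory Defs
  imports Main
begin

record ('v, 'y, 'c) scd =
  states :: "'v set"
  init   :: "'v set"
  obs    :: "'y set"
  trans  :: "'v \<Rightarrow> 'v \<Rightarrow> 'y set"
  outs   :: "'c set"
  out    :: "'v \<Rightarrow> 'c set"

definition is_scd :: "('v, 'y, 'c) scd \<Rightarrow> bool" where
  "is_scd F \<longleftrightarrow>
     finite (states F) \<and> states F \<noteq> {} \<and>
     init F \<subseteq> states F \<and> init F \<noteq> {} \<and>
     finite (obs F) \<and>
     (\<forall>v\<in>states F. \<forall>w\<in>states F. trans F v w \<subseteq> obs F) \<and>
     (\<forall>v\<in>states F. out F v \<subseteq> outs F \<and> out F v \<noteq> {})"

fun reach_from :: "('v, 'y, 'c) scd \<Rightarrow> 'v \<Rightarrow> 'y list \<Rightarrow> 'v set" where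
  "reach_from F v [] = (if v \<in> states F then {v} else {})"
| "reach_from F v (y # ys) =
     (\<Union>w \<in> {w \<in> states F. v \<in> states F \<and> y \<in> trans F v w}. reach_from F w ys)"

definition reached :: "('v, 'y, 'c) scd \<Rightarrow> 'y list \<Rightarrow> 'v set" where
  "reached F s = (\<Union>v \<in> init F. reach_from F v s)"

definition lang :: "('v, 'y, 'c) scd \<Rightarrow> 'y list set" where
  "lang F = {s. reached F s \<noteq> {}}"

definition outputs_of :: "('v, 'y, 'c) scd \<Rightarrow> 'y list \<Rightarrow> 'c set" where
  "outputs_of F s = (\<Union>v \<in> reached F s. out F v)"

definition output_simulates ::
  "('w, 'z, 'c) scd \<Rightarrow> ('v, 'y, 'c) scd \<Rightarrow> ('y list \<times> 'z list) set \<Rightarrow> bool" where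
  "output_simulates F' F R \<longleftrightarrow>
     (\<forall>s \<in> lang F.
        (\<exists>t. (s, t) \<in> R \<and> t \<in> lang F') \<and>
        (\<forall>t. (s, t) \<in> R \<longrightarrow> t \<in> lang F' \<and> outputs_of F' t \<subseteq> outputs_of F s))"

text \<open>Monoidal variator: monoid is the type 'd (class monoid_add, oplus = +, e = 0),
  right action act : Y x D -> Y on the observation set Y.\<close>
definition monoidal_variator :: "'y set \<Rightarrow> ('y \<Rightarrow> 'd::monoid_add \<Rightarrow> 'y) \<Rightarrow> bool" where
  "monoidal_variator Y act \<longleftrightarrow>
     (\<forall>y\<in>Y. \<forall>d. act y d \<in> Y) \<and>
     (\<forall>y\<in>Y. act y 0 = y) \<and>
     (\<forall>y\<in>Y. \<forall>d1 d2. act (act y d1) d2 = act y (d1 + d2))"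

text \<open>Strings in {eps} \<union> Y.D^* are lists over the alphabet 'y + 'd
  (Inl for elements of Y, Inr for elements of D).\<close>
definition delta_rel ::
  "('v, 'y, 'c) scd \<Rightarrow> ('y \<Rightarrow> 'd::monoid_add \<Rightarrow> 'y) \<Rightarrow> ('y list \<times> ('y + 'd) list) set" where
  "delta_rel F act =
     {([], [])}
     \<union> {([y0], [Inl y0]) | y0. y0 \<in> obs F \<and> [y0] \<in> lang F}
     \<union> {(y0 # ys, Inl y0 # map Inr ds) | y0 ys ds.
          y0 # ys \<in> lang F \<and> ys \<noteq> [] \<and> length ds = length ys \<and>
          (\<forall>k < length ds. (y0 # ys) ! (Suc k) = act ((y0 # ys) ! k) (ds ! k))}"

definition disaggregator :: "'y set \<Rightarrow> (('y + 'd::monoid_add) list \<times> ('y + 'd) list) set" where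
  "disaggregator Y =
     {([], [])}
     \<union> {([Inl y0], [Inl y0]) | y0. y0 \<in> Y}
     \<union> {(Inl y0 # map Inr ds, Inl y0 # map Inr ds') | y0 ds ds'.
          y0 \<in> Y \<and> ds \<noteq> [] \<and> ds' \<noteq> [] \<and> sum_list ds = sum_list ds'}"

definition integrator :: "'y set \<Rightarrow> (('y + 'd::monoid_add) list \<times> ('y + 'd) list) set" where
  "integrator Y =
     {([], [])}
     \<union> {([Inl y0], [Inl y0]) | y0. y0 \<in> Y}
     \<union> {(Inl y0 # map Inr ds, [Inl y0, Inr (sum_list ds)]) | y0 ds.
          y0 \<in> Y \<and> ds \<noteq> []}"

end

theory Submission
  imports Defs
begin

lemma integ_sub: "integrator Y \<subseteq> disaggregator Y"
proof
  fix p assume "p \<in> integrator Y"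
  then consider "p = ([], [])" | y0 where "p = ([Inl y0], [Inl y0])" "y0 \<in> Y"
    | y0 ds where "p = (Inl y0 # map Inr ds, Inl y0 # map Inr [sum_list ds])" "y0 \<in> Y" "ds \<noteq> []"
    unfolding integrator_def by auto
  then show "p \<in> disaggregator Y"
  proof cases
    case 3
    have "(Inl y0 # map Inr ds, Inl y0 # map Inr [sum_list ds]) \<in> {(Inl y0 # map Inr ds, Inl y0 # map Inr ds') | y0 ds ds'.
          y0 \<in> Y \<and> ds \<noteq> [] \<and> ds' \<noteq> [] \<and> sum_list ds = sum_list ds'}"
      using 3 by (intro CollectI exI[of _ y0] exI[of _ ds] exI[of _ "[sum_list ds]"]) simp
    then show ?thesis using 3 unfolding disaggregator_def by (intro UnI2) simp
  qed (auto simp: disaggregator_def)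
qed

lemma head_obs:
  assumes "is_scd F" "y # ys \<in> lang F"
  shows "y \<in> obs F"
proof -
  from assms(2) obtain v x where "v \<in> init F" "x \<in> reach_from F v (y # ys)"
    unfolding lang_def reached_def by auto
  then obtain w where "w \<in> states F" "v \<in> states F" "y \<in> trans F v w" by auto
  with assms(1) show ?thesis unfolding is_scd_def by blast
qed

lemma delta_integ:
  assumes "is_scd F" "(s, r) \<in> delta_rel F act"
  shows "\<exists>t. (r, t) \<in> integrator (obs F)"
  using assms(2) unfolding delta_rel_def
proof (elim UnE)
  assume "(s, r) \<in> {(y0 # ys, Inl y0 # map Inr ds) | y0 ys ds.
          y0 # ys \<in> lang F \<and> ys \<noteq> [] \<and> length ds = length ys \<and>
          (\<forall>k < length ds. (y0 # ys) ! (Suc k) = act ((y0 # ys) ! k) (ds ! k))}"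
  then obtain y0 ys ds where h: "r = Inl y0 # map Inr ds" "y0 # ys \<in> lang F" "ys \<noteq> []"
    "length ds = length ys" by blast
  then have "y0 \<in> obs F" "ds \<noteq> []" using head_obs[OF assms(1)] by auto
  then show ?thesis using h unfolding integrator_def by blast
qed (auto simp: integrator_def)

theorem lemma7:
  fixes F :: "('v, 'y, 'c) scd"
    and act :: "'y \<Rightarrow> 'd::monoid_add \<Rightarrow> 'y"
  assumes "is_scd F"
    and "monoidal_variator (obs F) act"
    and "\<exists>F' :: ('w, 'y + 'd, 'c) scd.
           is_scd F' \<and> output_simulates F' F (delta_rel F act O disaggregator (obs F))"
  shows "\<exists>F'' :: ('w, 'y + 'd, 'c) scd.
           is_scd F'' \<and> output_simulates F'' F (delta_rel F act O integrator (obs F))"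
proof -
  obtain F' :: "('w, 'y + 'd, 'c) scd" where F': "is_scd F'"
    "output_simulates F' F (delta_rel F act O disaggregator (obs F))" using assms(3) by blast
  have sub: "delta_rel F act O integrator (obs F) \<subseteq> delta_rel F act O disaggregator (obs F)"
    using integ_sub by blast
  have "output_simulates F' F (delta_rel F act O integrator (obs F))"
    unfolding output_simulates_def
  proof (intro ballI conjI allI impI)
    fix s assume s: "s \<in> lang F"
    with F'(2) obtain t where "(s, t) \<in> delta_rel F act O disaggregator (obs F)"
      unfolding output_simulates_def by blast
    then obtain r where r: "(s, r) \<in> delta_rel F act" by blast
    then obtain t' where t': "(r, t') \<in> integrator (obs F)" using delta_integ[OF assms(1)] by blast
    with r have st: "(s, t') \<in> delta_rel F act O integrator (obs F)" by blast
    with sub s F'(2) have "t' \<in> lang F'" unfolding output_simulates_def by blast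
    with st show "\<exists>t. (s, t) \<in> delta_rel F act O integrator (obs F) \<and> t \<in> lang F'" by blast
  next
    fix s t assume "s \<in> lang F" "(s, t) \<in> delta_rel F act O integrator (obs F)"
    with sub F'(2) show "t \<in> lang F'" "outputs_of F' t \<subseteq> outputs_of F s"
      unfolding output_simulates_def by blast+
  qed
  with F'(1) show ?thesis by blast
qed

end
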